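(* Let $\models$ be an intersective mixed consequence truth-relation on a finite set $V$ of truth values, with induced consequence relation $\vdash$ in a constant expressive setting. The following are equivalent: (i) $\vdash$ admits both a G-disjunction and a G-conjunction; (ii) every minimal representation of $\models$ is based on a disjunction-conjunction-compatible list of sets of designated values; (iii) some representation of $\models$ is based on a disjunction-conjunction-compatible list of sets of designated values.
   Context: $V$ contains distinct $1,0$; sets of designated values: $\mathcal{D}\subseteq V$, $1\in\mathcal{D}$, $0\notin\mathcal{D}$. $\gamma\models_{\mathcal{D}_p,\mathcal{D}_c}\delta$ iff ($\gamma\subseteq\mathcal{D}_p\Rightarrow\delta\cap\mathcal{D}_c\neq\emptyset$). An intersective mixed truth-relation is $\models_{\mathcal{D}_p^1,\mathcal{D}_c^1}\cap\dots\cap\models_{\mathcal{D}_p^K,\mathcal{D}_c^K}$; such a list is a representation, based on the list $\mathcal{D}_p^1,\mathcal{D}_c^1,\dots,\mathcal{D}_p^K,\mathcal{D}_c^K$; minimal if $K$ is least possible. A list $\mathcal{D}_1,\dots,\mathcal{D}_n$ is disjunction-conjunction-compatible if (DC1) for each $\mathcal{D}_i$, either some truth value belongs to $\mathcal{D}_i$ and to no other set of the list, or $\mathcal{D}_i$ is included in another, distinct set of the list; and (DC2) for every non-empty sublist $\mathcal{D}'_1,\dots,\mathcal{D}'_{n'}$ there is $x\in V$ such that for every $i$: $x\in\mathcal{D}_i$ iff $\exists i'$ with $\mathcal{D}'_{i'}\subseteq\mathcal{D}_i$. Semantics: valuations mapping atoms to $V$, connectives interpreted by fixed truth functions, extended compositionally,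 every assignment to finitely many distinct atoms realized; constant expressive: every value is the constant value of some formula. $\Gamma\vdash\Delta$ iff $v(\Gamma)\models v(\Delta)$ for all $v$; $\Gamma,A=\Gamma\cup\{A\}$. G-conjunction: $\Gamma,A\wedge B\vdash\Delta$ iff $\Gamma,A,B\vdash\Delta$; $\Gamma\vdash A\wedge B,\Delta$ iff ($\Gamma\vdash A,\Delta$ and $\Gamma\vdash B,\Delta$). G-disjunction: $\Gamma\vdash A\vee B,\Delta$ iff $\Gamma\vdash A,B,\Delta$; $\Gamma,A\vee B\vdash\Delta$ iff ($\Gamma,A\vdash\Delta$ and $\Gamma,B\vdash\Delta$); all for every $\Gamma,\Delta,A,B$. *)

theory Defs
  imports Main
begin

text \<open>Truth values: a finite type 'v (so V = UNIV is finite).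
  Designated sets: subsets containing one and not containing zero.\<close>

definition designated :: "'v \<Rightarrow> 'v \<Rightarrow> 'v set \<Rightarrow> bool" where
  "designated one zero D \<longleftrightarrow> one \<in> D \<and> zero \<notin> D"

definition mixed_rel :: "'v set \<Rightarrow> 'v set \<Rightarrow> 'v set \<Rightarrow> 'v set \<Rightarrow> bool" where
  "mixed_rel Dp Dc \<gamma> \<delta> \<longleftrightarrow> (\<gamma> \<subseteq> Dp \<longrightarrow> \<delta> \<inter> Dc \<noteq> {})"

definition is_rep :: "'v \<Rightarrow> 'v \<Rightarrow> ('v set \<Rightarrow> 'v set \<Rightarrow> bool) \<Rightarrow> ('v set \<times> 'v set) list \<Rightarrow> bool" where
  "is_rep one zero R Rs \<longleftrightarrow> Rs \<noteq> [] \<and>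
     (\<forall>(Dp, Dc) \<in> set Rs. designated one zero Dp \<and> designated one zero Dc) \<and>
     R = (\<lambda>\<gamma> \<delta>. \<forall>(Dp, Dc) \<in> set Rs. mixed_rel Dp Dc \<gamma> \<delta>)"

definition intersective_mixed :: "'v \<Rightarrow> 'v \<Rightarrow> ('v set \<Rightarrow> 'v set \<Rightarrow> bool) \<Rightarrow> bool" where
  "intersective_mixed one zero R \<longleftrightarrow> (\<exists>Rs. is_rep one zero R Rs)"

definition minimal_rep :: "'v \<Rightarrow> 'v \<Rightarrow> ('v set \<Rightarrow> 'v set \<Rightarrow> bool) \<Rightarrow> ('v set \<times> 'v set) list \<Rightarrow> bool" where
  "minimal_rep one zero R Rs \<longleftrightarrow> is_rep one zero R Rs \<and>
     (\<forall>Rs'. is_rep one zero R Rs' \<longrightarrow> length Rs \<le> length Rs')"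

definition based_list :: "('v set \<times> 'v set) list \<Rightarrow> 'v set list" where
  "based_list Rs = concat (map (\<lambda>(Dp, Dc). [Dp, Dc]) Rs)"

definition DC1 :: "'v set list \<Rightarrow> bool" where
  "DC1 Ds \<longleftrightarrow> (\<forall>i < length Ds.
      (\<exists>x. x \<in> Ds ! i \<and> (\<forall>j < length Ds. Ds ! j \<noteq> Ds ! i \<longrightarrow> x \<notin> Ds ! j))
    \<or> (\<exists>j < length Ds. Ds ! j \<noteq> Ds ! i \<and> Ds ! i \<subseteq> Ds ! j))"

text \<open>A non-empty sublist is given by a non-empty set S of indices.\<close>
definition DC2 :: "'v set list \<Rightarrow> bool" where
  "DC2 Ds \<longleftrightarrow> (\<forall>S. S \<noteq> {} \<longrightarrow> S \<subseteq> {..<length Ds} \<longrightarrow>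
      (\<exists>x. \<forall>i < length Ds. x \<in> Ds ! i \<longleftrightarrow> (\<exists>i' \<in> S. Ds ! i' \<subseteq> Ds ! i)))"

definition dc_compatible :: "'v set list \<Rightarrow> bool" where
  "dc_compatible Ds \<longleftrightarrow> DC1 Ds \<and> DC2 Ds"

datatype 'c form = Atom nat | Op 'c "'c form list"

fun eval :: "('c \<Rightarrow> 'v list \<Rightarrow> 'v) \<Rightarrow> (nat \<Rightarrow> 'v) \<Rightarrow> 'c form \<Rightarrow> 'v" where
  "eval I a (Atom n) = a n"
| "eval I a (Op c As) = I c (map (eval I a) As)"

definition constant_expressive :: "('c \<Rightarrow> 'v list \<Rightarrow> 'v) \<Rightarrow> bool" where
  "constant_expressive I \<longleftrightarrow> (\<forall>x. \<exists>A. \<forall>a. eval I a A = x)"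

definition conseq :: "('c \<Rightarrow> 'v list \<Rightarrow> 'v) \<Rightarrow> ('v set \<Rightarrow> 'v set \<Rightarrow> bool)
    \<Rightarrow> 'c form set \<Rightarrow> 'c form set \<Rightarrow> bool" where
  "conseq I R \<Gamma> \<Delta> \<longleftrightarrow> (\<forall>a. R (eval I a ` \<Gamma>) (eval I a ` \<Delta>))"

definition G_conj :: "('c \<Rightarrow> 'v list \<Rightarrow> 'v) \<Rightarrow> ('v set \<Rightarrow> 'v set \<Rightarrow> bool) \<Rightarrow> 'c \<Rightarrow> bool" where
  "G_conj I R c \<longleftrightarrow> (\<forall>\<Gamma> \<Delta> A B.
     (conseq I R (insert (Op c [A, B]) \<Gamma>) \<Delta> \<longleftrightarrow> conseq I R (insert A (insert B \<Gamma>)) \<Delta>) \<and>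
     (conseq I R \<Gamma> (insert (Op c [A, B]) \<Delta>) \<longleftrightarrow>
        conseq I R \<Gamma> (insert A \<Delta>) \<and> conseq I R \<Gamma> (insert B \<Delta>)))"

definition G_disj :: "('c \<Rightarrow> 'v list \<Rightarrow> 'v) \<Rightarrow> ('v set \<Rightarrow> 'v set \<Rightarrow> bool) \<Rightarrow> 'c \<Rightarrow> bool" where
  "G_disj I R c \<longleftrightarrow> (\<forall>\<Gamma> \<Delta> A B.
     (conseq I R \<Gamma> (insert (Op c [A, B]) \<Delta>) \<longleftrightarrow> conseq I R \<Gamma> (insert A (insert B \<Delta>))) \<and>
     (conseq I R (insert (Op c [A, B]) \<Gamma>) \<Delta> \<longleftrightarrow>
        conseq I R (insert A \<Gamma>) \<Delta> \<and> conseq I R (insert B \<Gamma>) \<Delta>))"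

datatype 'c ext_conn = Base 'c | Cj | Dj

fun ext_interp :: "('c \<Rightarrow> 'v list \<Rightarrow> 'v) \<Rightarrow> ('v \<Rightarrow> 'v \<Rightarrow> 'v) \<Rightarrow> ('v \<Rightarrow> 'v \<Rightarrow> 'v)
    \<Rightarrow> 'c ext_conn \<Rightarrow> 'v list \<Rightarrow> 'v" where
  "ext_interp I fc fd (Base c) xs = I c xs"
| "ext_interp I fc fd Cj xs = fc (xs ! 0) (xs ! 1)"
| "ext_interp I fc fd Dj xs = fd (xs ! 0) (xs ! 1)"

text \<open>The consequence relation admits a G-conjunction and a G-disjunction: there are
  binary truth functions which, as connectives added to the language, obey the G-rules.\<close>
definition admits_G_conj_disj :: "('c \<Rightarrow> 'v list \<Rightarrow> 'v) \<Rightarrow> ('v set \<Rightarrow> 'v set \<Rightarrow> bool) \<Rightarrow> bool" where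
  "admits_G_conj_disj I R \<longleftrightarrow> (\<exists>fc fd.
     G_conj (ext_interp I fc fd) R Cj \<and> G_disj (ext_interp I fc fd) R Dj)"

end

theory Submission
  imports Defs
begin

definition condC :: "('v set \<Rightarrow> 'v set \<Rightarrow> bool) \<Rightarrow> ('v \<Rightarrow> 'v \<Rightarrow> 'v) \<Rightarrow> bool" where
  "condC R f \<longleftrightarrow> (\<forall>\<gamma> \<delta> a b. (R (insert (f a b) \<gamma>) \<delta> \<longleftrightarrow> R (insert a (insert b \<gamma>)) \<delta>) \<and>
     (R \<gamma> (insert (f a b) \<delta>) \<longleftrightarrow> R \<gamma> (insert a \<delta>) \<and> R \<gamma> (insert b \<delta>)))"

definition condD :: "('v set \<Rightarrow> 'v set \<Rightarrow> bool) \<Rightarrow> ('v \<Rightarrow> 'v \<Rightarrow> 'v) \<Rightarrow> bool" where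
  "condD R f \<longleftrightarrow> (\<forall>\<gamma> \<delta> a b. (R \<gamma> (insert (f a b) \<delta>) \<longleftrightarrow> R \<gamma> (insert a (insert b \<delta>))) \<and>
     (R (insert (f a b) \<gamma>) \<delta> \<longleftrightarrow> R (insert a \<gamma>) \<delta> \<and> R (insert b \<gamma>) \<delta>))"

lemma eval_lift: "eval (ext_interp I fc fd) a (map_form Base A) = eval I a A"
proof (induction A)
  case (Atom n) then show ?case by simp
next
  case (Op c As)
  then show ?case by (simp cong: map_cong)
qed

definition cst :: "('c \<Rightarrow> 'v list \<Rightarrow> 'v) \<Rightarrow> 'v \<Rightarrow> 'c ext_conn form" where
  "cst I x = map_form Base (SOME A. \<forall>a. eval I a A = x)"

lemma eval_cst:
  assumes "constant_expressive I"
  shows "eval (ext_interp I fc fd) a (cst I x) = x"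
proof -
  obtain A where "\<forall>a. eval I a A = x" using assms unfolding constant_expressive_def by blast
  then have "\<forall>a. eval I a (SOME A. \<forall>a. eval I a A = x) = x" by (rule someI)
  then show ?thesis unfolding cst_def eval_lift by simp
qed

lemma eval_cst_img:
  assumes "constant_expressive I"
  shows "eval (ext_interp I fc fd) a ` (cst I ` X) = X"
  using eval_cst[OF assms] by (simp add: image_image)

lemma admits_cond:
  assumes ce: "constant_expressive I" and ad: "admits_G_conj_disj I R"
  shows "\<exists>fc fd. condC R fc \<and> condD R fd"
proof -
  obtain fc fd where gc: "G_conj (ext_interp I fc fd) R Cj" and gd: "G_disj (ext_interp I fc fd) R Dj"
    using ad unfolding admits_G_conj_disj_def by blast
  let ?J = "ext_interp I fc fd"
  have cs: "conseq ?J R (cst I ` X) (cst I ` Y) \<longleftrightarrow> R X Y" for X Y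
    unfolding conseq_def eval_cst_img[OF ce] by simp
  show ?thesis
  proof (intro exI conjI)
    show "condC R fc" unfolding condC_def
    proof (intro allI conjI)
      fix \<gamma> \<delta> a b
      show "R (insert (fc a b) \<gamma>) \<delta> \<longleftrightarrow> R (insert a (insert b \<gamma>)) \<delta>"
        using gc unfolding G_conj_def
        apply (erule_tac x="cst I ` \<gamma>" in allE)
        apply (erule_tac x="cst I ` \<delta>" in allE)
        apply (erule_tac x="cst I a" in allE)
        apply (erule_tac x="cst I b" in allE)
        by (simp add: conseq_def eval_cst_img[OF ce] eval_cst[OF ce])
      show "R \<gamma> (insert (fc a b) \<delta>) \<longleftrightarrow> R \<gamma> (insert a \<delta>) \<and> R \<gamma> (insert b \<delta>)"
        using gc unfolding G_conj_def
        apply (erule_tac x="cst I ` \<gamma>" in allE)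
        apply (erule_tac x="cst I ` \<delta>" in allE)
        apply (erule_tac x="cst I a" in allE)
        apply (erule_tac x="cst I b" in allE)
        by (simp add: conseq_def eval_cst_img[OF ce] eval_cst[OF ce])
    qed
    show "condD R fd" unfolding condD_def
    proof (intro allI conjI)
      fix \<gamma> \<delta> a b
      show "R \<gamma> (insert (fd a b) \<delta>) \<longleftrightarrow> R \<gamma> (insert a (insert b \<delta>))"
        using gd unfolding G_disj_def
        apply (erule_tac x="cst I ` \<gamma>" in allE)
        apply (erule_tac x="cst I ` \<delta>" in allE)
        apply (erule_tac x="cst I a" in allE)
        apply (erule_tac x="cst I b" in allE)
        by (simp add: conseq_def eval_cst_img[OF ce] eval_cst[OF ce])
      show "R (insert (fd a b) \<gamma>) \<delta> \<longleftrightarrow> R (insert a \<gamma>) \<delta> \<and> R (insert b \<gamma>) \<delta>"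
        using gd unfolding G_disj_def
        apply (erule_tac x="cst I ` \<gamma>" in allE)
        apply (erule_tac x="cst I ` \<delta>" in allE)
        apply (erule_tac x="cst I a" in allE)
        apply (erule_tac x="cst I b" in allE)
        by (simp add: conseq_def eval_cst_img[OF ce] eval_cst[OF ce])
    qed
  qed
qed

lemma cond_admits:
  assumes "condC R fc" "condD R fd"
  shows "admits_G_conj_disj I R"
  unfolding admits_G_conj_disj_def
proof (intro exI conjI)
  show "G_conj (ext_interp I fc fd) R Cj"
    using assms(1) unfolding G_conj_def condC_def conseq_def by (simp add: image_insert) blast
  show "G_disj (ext_interp I fc fd) R Dj"
    using assms(2) unfolding G_disj_def condD_def conseq_def by (simp add: image_insert) blast
qed

definition Clo :: "'v set list \<Rightarrow> bool" where
  "Clo Ds \<longleftrightarrow> (\<forall>a b. (\<exists>c. \<forall>D\<in>set Ds. c \<in> D \<longleftrightarrow> a \<in> D \<and> b \<in> D)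
                 \<and> (\<exists>c. \<forall>D\<in>set Ds. c \<in> D \<longleftrightarrow> a \<in> D \<or> b \<in> D))"

lemma set_based: "D \<in> set (based_list Rs) \<longleftrightarrow> (\<exists>P C. (P, C) \<in> set Rs \<and> (D = P \<or> D = C))"
  by (auto simp: based_list_def)

lemma clo_cond:
  assumes rep: "is_rep one zero R Rs" and cl: "Clo (based_list Rs)"
  shows "\<exists>fc fd. condC R fc \<and> condD R fd"
proof -
  define fc where "fc a b = (SOME c. \<forall>D\<in>set (based_list Rs). c \<in> D \<longleftrightarrow> a \<in> D \<and> b \<in> D)" for a b
  define fd where "fd a b = (SOME c. \<forall>D\<in>set (based_list Rs). c \<in> D \<longleftrightarrow> a \<in> D \<or> b \<in> D)" for a b
  have fc: "\<forall>D\<in>set (based_list Rs). fc a b \<in> D \<longleftrightarrow> a \<in> D \<and> b \<in> D" for a b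
  proof -
    have "\<exists>c. \<forall>D\<in>set (based_list Rs). c \<in> D \<longleftrightarrow> a \<in> D \<and> b \<in> D" using cl unfolding Clo_def by blast
    then show ?thesis unfolding fc_def by (rule someI_ex)
  qed
  have fd: "\<forall>D\<in>set (based_list Rs). fd a b \<in> D \<longleftrightarrow> a \<in> D \<or> b \<in> D" for a b
  proof -
    have "\<exists>c. \<forall>D\<in>set (based_list Rs). c \<in> D \<longleftrightarrow> a \<in> D \<or> b \<in> D" using cl unfolding Clo_def by blast
    then show ?thesis unfolding fd_def by (rule someI_ex)
  qed
  have fc2: "(fc a b \<in> P \<longleftrightarrow> a \<in> P \<and> b \<in> P) \<and> (fc a b \<in> C \<longleftrightarrow> a \<in> C \<and> b \<in> C)"
    if "(P, C) \<in> set Rs" for P C a b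
  proof -
    have "P \<in> set (based_list Rs)" "C \<in> set (based_list Rs)" using that unfolding set_based by blast+
    then show ?thesis using fc[of a b] by blast
  qed
  have fd2: "(fd a b \<in> P \<longleftrightarrow> a \<in> P \<or> b \<in> P) \<and> (fd a b \<in> C \<longleftrightarrow> a \<in> C \<or> b \<in> C)"
    if "(P, C) \<in> set Rs" for P C a b
  proof -
    have "P \<in> set (based_list Rs)" "C \<in> set (based_list Rs)" using that unfolding set_based by blast+
    then show ?thesis using fd[of a b] by blast
  qed
  have R: "R = (\<lambda>\<gamma> \<delta>. \<forall>(Dp, Dc) \<in> set Rs. mixed_rel Dp Dc \<gamma> \<delta>)"
    using rep unfolding is_rep_def by blast
  have p1: "mixed_rel P C (insert (fc a b) \<gamma>) \<delta> \<longleftrightarrow> mixed_rel P C (insert a (insert b \<gamma>)) \<delta>"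
    and p2: "mixed_rel P C \<gamma> (insert (fc a b) \<delta>) \<longleftrightarrow> mixed_rel P C \<gamma> (insert a \<delta>) \<and> mixed_rel P C \<gamma> (insert b \<delta>)"
    and p3: "mixed_rel P C \<gamma> (insert (fd a b) \<delta>) \<longleftrightarrow> mixed_rel P C \<gamma> (insert a (insert b \<delta>))"
    and p4: "mixed_rel P C (insert (fd a b) \<gamma>) \<delta> \<longleftrightarrow> mixed_rel P C (insert a \<gamma>) \<delta> \<and> mixed_rel P C (insert b \<gamma>) \<delta>"
    if "(P, C) \<in> set Rs" for P C a b \<gamma> \<delta>
    using fc2[OF that, of a b] fd2[OF that, of a b] unfolding mixed_rel_def by blast+
  have "condC R fc"
    unfolding condC_def R
  proof (intro allI conjI)
    fix \<gamma> \<delta> a b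
    show "(\<forall>(Dp, Dc)\<in>set Rs. mixed_rel Dp Dc (insert (fc a b) \<gamma>) \<delta>) =
          (\<forall>(Dp, Dc)\<in>set Rs. mixed_rel Dp Dc (insert a (insert b \<gamma>)) \<delta>)"
      using p1 by auto
    show "(\<forall>(Dp, Dc)\<in>set Rs. mixed_rel Dp Dc \<gamma> (insert (fc a b) \<delta>)) =
          ((\<forall>(Dp, Dc)\<in>set Rs. mixed_rel Dp Dc \<gamma> (insert a \<delta>)) \<and>
           (\<forall>(Dp, Dc)\<in>set Rs. mixed_rel Dp Dc \<gamma> (insert b \<delta>)))"
      using p2 by auto
  qed
  moreover have "condD R fd"
    unfolding condD_def R
  proof (intro allI conjI)
    fix \<gamma> \<delta> a b
    show "(\<forall>(Dp, Dc)\<in>set Rs. mixed_rel Dp Dc \<gamma> (insert (fd a b) \<delta>)) =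
          (\<forall>(Dp, Dc)\<in>set Rs. mixed_rel Dp Dc \<gamma> (insert a (insert b \<delta>)))"
      using p3 by auto
    show "(\<forall>(Dp, Dc)\<in>set Rs. mixed_rel Dp Dc (insert (fd a b) \<gamma>) \<delta>) =
          ((\<forall>(Dp, Dc)\<in>set Rs. mixed_rel Dp Dc (insert a \<gamma>) \<delta>) \<and>
           (\<forall>(Dp, Dc)\<in>set Rs. mixed_rel Dp Dc (insert b \<gamma>) \<delta>))"
      using p4 by auto
  qed
  ultimately show ?thesis by blast
qed

lemma minimal_dom:
  assumes m: "minimal_rep one zero R Rs" and in1: "(P, C) \<in> set Rs" and in2: "(P', C') \<in> set Rs"
    and sub: "P \<subseteq> P'" "C' \<subseteq> C"
  shows "(P', C') = (P, C)"
proof (rule ccontr)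
  assume ne: "(P', C') \<noteq> (P, C)"
  define Rs' where "Rs' = filter (\<lambda>p. p \<noteq> (P, C)) Rs"
  have rep: "is_rep one zero R Rs" using m unfolding minimal_rep_def by blast
  have "(P', C') \<in> set Rs'" using in2 ne unfolding Rs'_def by simp
  then have "Rs' \<noteq> []" by auto
  moreover have "\<forall>(Dp, Dc) \<in> set Rs'. designated one zero Dp \<and> designated one zero Dc"
    using rep unfolding is_rep_def Rs'_def by auto
  moreover have "R = (\<lambda>\<gamma> \<delta>. \<forall>(Dp, Dc) \<in> set Rs'. mixed_rel Dp Dc \<gamma> \<delta>)"
  proof -
    have "(\<forall>(Dp, Dc) \<in> set Rs'. mixed_rel Dp Dc \<gamma> \<delta>) \<longleftrightarrow> (\<forall>(Dp, Dc) \<in> set Rs. mixed_rel Dp Dc \<gamma> \<delta>)"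
      for \<gamma> \<delta>
    proof
      assume a: "\<forall>(Dp, Dc) \<in> set Rs'. mixed_rel Dp Dc \<gamma> \<delta>"
      then have "mixed_rel P' C' \<gamma> \<delta>" using \<open>(P', C') \<in> set Rs'\<close> by blast
      then have "mixed_rel P C \<gamma> \<delta>" using sub unfolding mixed_rel_def by blast
      then show "\<forall>(Dp, Dc) \<in> set Rs. mixed_rel Dp Dc \<gamma> \<delta>" using a unfolding Rs'_def by auto
    qed (auto simp: Rs'_def)
    then show ?thesis using rep unfolding is_rep_def by auto
  qed
  ultimately have "is_rep one zero R Rs'" unfolding is_rep_def by blast
  then have "length Rs \<le> length Rs'" using m unfolding minimal_rep_def by blast
  moreover have "length Rs' < length Rs" unfolding Rs'_def using in1 by (rule length_filter_less) simp
  ultimately show False by simp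
qed

lemma key1:
  assumes m: "minimal_rep one zero R Rs" and in1: "(P, C) \<in> set Rs" and g: "P \<subseteq> \<gamma>"
  shows "R \<gamma> (- C) \<longleftrightarrow> \<not> \<gamma> \<subseteq> P"
proof -
  have R: "R = (\<lambda>\<gamma> \<delta>. \<forall>(Dp, Dc) \<in> set Rs. mixed_rel Dp Dc \<gamma> \<delta>)"
    using m unfolding minimal_rep_def is_rep_def by blast
  show ?thesis
  proof
    assume "R \<gamma> (- C)"
    then have "mixed_rel P C \<gamma> (- C)" using in1 R by auto
    then show "\<not> \<gamma> \<subseteq> P" unfolding mixed_rel_def by auto
  next
    assume ns: "\<not> \<gamma> \<subseteq> P"
    have "mixed_rel P' C' \<gamma> (- C)" if "(P', C') \<in> set Rs" for P' C'
    proof (rule ccontr)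
      assume "\<not> mixed_rel P' C' \<gamma> (- C)"
      then have "\<gamma> \<subseteq> P'" "C' \<subseteq> C" unfolding mixed_rel_def by auto
      then have "(P', C') = (P, C)" using minimal_dom[OF m in1 that] g by blast
      then show False using ns \<open>\<gamma> \<subseteq> P'\<close> by simp
    qed
    then show "R \<gamma> (- C)" unfolding R by auto
  qed
qed

lemma key2:
  assumes m: "minimal_rep one zero R Rs" and in1: "(P, C) \<in> set Rs" and g: "- C \<subseteq> \<delta>"
  shows "R P \<delta> \<longleftrightarrow> \<delta> \<inter> C \<noteq> {}"
proof -
  have R: "R = (\<lambda>\<gamma> \<delta>. \<forall>(Dp, Dc) \<in> set Rs. mixed_rel Dp Dc \<gamma> \<delta>)"
    using m unfolding minimal_rep_def is_rep_def by blast
  show ?thesis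
  proof
    assume "R P \<delta>"
    then have "mixed_rel P C P \<delta>" using in1 R by auto
    then show "\<delta> \<inter> C \<noteq> {}" unfolding mixed_rel_def by auto
  next
    assume ns: "\<delta> \<inter> C \<noteq> {}"
    have "mixed_rel P' C' P \<delta>" if "(P', C') \<in> set Rs" for P' C'
    proof (rule ccontr)
      assume "\<not> mixed_rel P' C' P \<delta>"
      then have "P \<subseteq> P'" "\<delta> \<inter> C' = {}" unfolding mixed_rel_def by auto
      then have "C' \<subseteq> C" using g by blast
      then have "(P', C') = (P, C)" using minimal_dom[OF m in1 that] \<open>P \<subseteq> P'\<close> by blast
      then show False using ns \<open>\<delta> \<inter> C' = {}\<close> by simp
    qed
    then show "R P \<delta>" unfolding R by auto
  qed
qed

lemma cond_clo:
  assumes m: "minimal_rep one zero R Rs" and cc: "condC R fc" and cd: "condD R fd"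
  shows "Clo (based_list Rs)"
proof -
  have A: "(fc a b \<in> P \<longleftrightarrow> a \<in> P \<and> b \<in> P) \<and> (fc a b \<in> C \<longleftrightarrow> a \<in> C \<and> b \<in> C)
         \<and> (fd a b \<in> P \<longleftrightarrow> a \<in> P \<or> b \<in> P) \<and> (fd a b \<in> C \<longleftrightarrow> a \<in> C \<or> b \<in> C)"
    if in1: "(P, C) \<in> set Rs" for P C a b
  proof -
    have k1: "R \<gamma> (- C) \<longleftrightarrow> \<not> \<gamma> \<subseteq> P" if "P \<subseteq> \<gamma>" for \<gamma> using key1[OF m in1 that] .
    have k2: "R P \<delta> \<longleftrightarrow> \<delta> \<inter> C \<noteq> {}" if "- C \<subseteq> \<delta>" for \<delta> using key2[OF m in1 that] .
    have c1: "R (insert (fc a b) P) (- C) \<longleftrightarrow> R (insert a (insert b P)) (- C)"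
     and c2: "R P (insert (fc a b) (- C)) \<longleftrightarrow> R P (insert a (- C)) \<and> R P (insert b (- C))"
      using cc unfolding condC_def by blast+
    have d1: "R P (insert (fd a b) (- C)) \<longleftrightarrow> R P (insert a (insert b (- C)))"
     and d2: "R (insert (fd a b) P) (- C) \<longleftrightarrow> R (insert a P) (- C) \<and> R (insert b P) (- C)"
      using cd unfolding condD_def by blast+
    have e1: "R (insert x P) (- C) \<longleftrightarrow> x \<notin> P" for x
      using k1[of "insert x P"] by auto
    have e2: "R (insert x (insert y P)) (- C) \<longleftrightarrow> \<not> (x \<in> P \<and> y \<in> P)" for x y
      using k1[of "insert x (insert y P)"] by auto
    have e3: "R P (insert x (- C)) \<longleftrightarrow> x \<in> C" for x
      using k2[of "insert x (- C)"] by auto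
    have e4: "R P (insert x (insert y (- C))) \<longleftrightarrow> x \<in> C \<or> y \<in> C" for x y
      using k2[of "insert x (insert y (- C))"] by auto
    show ?thesis
      using c1 c2 d1 d2 unfolding e1 e2 e3 e4 by blast
  qed
  show ?thesis unfolding Clo_def
  proof (intro allI conjI)
    fix a b
    show "\<exists>c. \<forall>D\<in>set (based_list Rs). c \<in> D \<longleftrightarrow> a \<in> D \<and> b \<in> D"
      using A by (intro exI[of _ "fc a b"]) (auto simp: set_based)
    show "\<exists>c. \<forall>D\<in>set (based_list Rs). c \<in> D \<longleftrightarrow> a \<in> D \<or> b \<in> D"
      using A by (intro exI[of _ "fd a b"]) (auto simp: set_based)
  qed
qed

lemma dc2_clo:
  assumes d: "DC2 Ds" and oz: "\<forall>D\<in>set Ds. one \<in> D \<and> zero \<notin> D"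
  shows "Clo Ds"
  unfolding Clo_def
proof (intro allI conjI)
  fix a b
  have gen: "\<exists>c. \<forall>D\<in>set Ds. c \<in> D \<longleftrightarrow> Q D" if up: "\<And>D D'. D \<subseteq> D' \<Longrightarrow> Q D \<Longrightarrow> Q D'" for Q
  proof (cases "{i. i < length Ds \<and> Q (Ds ! i)} = {}")
    case True
    show ?thesis
    proof (intro exI ballI)
      fix D assume "D \<in> set Ds"
      then obtain i where i: "i < length Ds" "D = Ds ! i" by (auto simp: in_set_conv_nth)
      then show "zero \<in> D \<longleftrightarrow> Q D" using True oz \<open>D \<in> set Ds\<close> by auto
    qed
  next
    case False
    then obtain x where x: "\<forall>i < length Ds. x \<in> Ds ! i \<longleftrightarrow> (\<exists>i' \<in> {i. i < length Ds \<and> Q (Ds ! i)}. Ds ! i' \<subseteq> Ds ! i)"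
      using d unfolding DC2_def by (metis (no_types, lifting) lessThan_iff mem_Collect_eq subsetI)
    show ?thesis
    proof (intro exI ballI)
      fix D assume "D \<in> set Ds"
      then obtain i where i: "i < length Ds" "D = Ds ! i" by (auto simp: in_set_conv_nth)
      then show "x \<in> D \<longleftrightarrow> Q D" using x up by blast
    qed
  qed
  show "\<exists>c. \<forall>D\<in>set Ds. c \<in> D \<longleftrightarrow> a \<in> D \<and> b \<in> D" by (rule gen) blast
  show "\<exists>c. \<forall>D\<in>set Ds. c \<in> D \<longleftrightarrow> a \<in> D \<or> b \<in> D" by (rule gen) blast
qed

lemma clo_all:
  assumes c: "Clo Ds" and "finite X" "X \<noteq> {}"
  shows "\<exists>c. \<forall>D\<in>set Ds. c \<in> D \<longleftrightarrow> X \<subseteq> D"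
  using assms(2,3)
proof (induction X rule: finite_ne_induct)
  case (singleton x) then show ?case by auto
next
  case (insert x F)
  then obtain c where "\<forall>D\<in>set Ds. c \<in> D \<longleftrightarrow> F \<subseteq> D" by blast
  moreover obtain c' where "\<forall>D\<in>set Ds. c' \<in> D \<longleftrightarrow> x \<in> D \<and> c \<in> D"
    using c unfolding Clo_def by blast
  ultimately show ?case by auto
qed

lemma clo_ex:
  assumes c: "Clo Ds" and "finite S" "S \<noteq> {}"
    and h: "\<forall>i\<in>S. \<exists>c. \<forall>D\<in>set Ds. c \<in> D \<longleftrightarrow> Q i D"
  shows "\<exists>c. \<forall>D\<in>set Ds. c \<in> D \<longleftrightarrow> (\<exists>i\<in>S. Q i D)"
  using assms(2,3,4)
proof (induction S rule: finite_ne_induct)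
  case (singleton x) then show ?case by auto
next
  case (insert x F)
  then obtain c where "\<forall>D\<in>set Ds. c \<in> D \<longleftrightarrow> (\<exists>i\<in>F. Q i D)" by blast
  moreover obtain d where "\<forall>D\<in>set Ds. d \<in> D \<longleftrightarrow> Q x D" using insert.prems by blast
  moreover obtain c' where "\<forall>D\<in>set Ds. c' \<in> D \<longleftrightarrow> d \<in> D \<or> c \<in> D"
    using c unfolding Clo_def by blast
  ultimately show ?case by auto
qed

lemma clo_dc2:
  fixes Ds :: "'v::finite set list"
  assumes c: "Clo Ds" and o: "\<forall>D\<in>set Ds. one \<in> D"
  shows "DC2 Ds"
  unfolding DC2_def
proof (intro allI impI)
  fix S assume ne: "S \<noteq> {}" and sub: "S \<subseteq> {..<length Ds}"
  have fin: "finite S" using sub finite_subset by blast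
  have "\<forall>i\<in>S. \<exists>c. \<forall>D\<in>set Ds. c \<in> D \<longleftrightarrow> Ds ! i \<subseteq> D"
  proof
    fix i assume "i \<in> S"
    then have "Ds ! i \<in> set Ds" using sub by auto
    then have "Ds ! i \<noteq> {}" using o by auto
    then show "\<exists>c. \<forall>D\<in>set Ds. c \<in> D \<longleftrightarrow> Ds ! i \<subseteq> D" using clo_all[OF c] by simp
  qed
  from clo_ex[OF c fin ne this] obtain x where x: "\<forall>D\<in>set Ds. x \<in> D \<longleftrightarrow> (\<exists>i\<in>S. Ds ! i \<subseteq> D)"
    by blast
  show "\<exists>x. \<forall>i<length Ds. (x \<in> Ds ! i) = (\<exists>i'\<in>S. Ds ! i' \<subseteq> Ds ! i)"
    using x by (intro exI[of _ x]) auto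
qed

lemma dc2_dc1:
  assumes d: "DC2 Ds" shows "DC1 Ds"
  unfolding DC1_def
proof (intro allI impI)
  fix i assume i: "i < length Ds"
  obtain x where x: "\<forall>j < length Ds. x \<in> Ds ! j \<longleftrightarrow> (\<exists>i' \<in> {i}. Ds ! i' \<subseteq> Ds ! j)"
    using d i unfolding DC2_def by (metis empty_not_insert insert_subset lessThan_iff empty_subsetI)
  show "(\<exists>x. x \<in> Ds ! i \<and> (\<forall>j<length Ds. Ds ! j \<noteq> Ds ! i \<longrightarrow> x \<notin> Ds ! j)) \<or>
        (\<exists>j<length Ds. Ds ! j \<noteq> Ds ! i \<and> Ds ! i \<subseteq> Ds ! j)"
  proof (cases "\<exists>j<length Ds. Ds ! j \<noteq> Ds ! i \<and> Ds ! i \<subseteq> Ds ! j")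
    case True then show ?thesis by blast
  next
    case False
    then have "x \<in> Ds ! i \<and> (\<forall>j<length Ds. Ds ! j \<noteq> Ds ! i \<longrightarrow> x \<notin> Ds ! j)"
      using x i by auto
    then show ?thesis by blast
  qed
qed

lemma rep_oz:
  assumes "is_rep one zero R Rs"
  shows "\<forall>D\<in>set (based_list Rs). one \<in> D \<and> zero \<notin> D"
proof
  fix D assume "D \<in> set (based_list Rs)"
  then obtain P C where pc: "(P, C) \<in> set Rs" "D = P \<or> D = C" unfolding set_based by blast
  have "designated one zero P \<and> designated one zero C" using assms pc(1) unfolding is_rep_def by blast
  then show "one \<in> D \<and> zero \<notin> D" using pc(2) unfolding designated_def by blast
qed

lemma dc_iff_clo:
  fixes Rs :: "('v::finite set \<times> 'v set) list"
  assumes "is_rep one zero R Rs"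
  shows "dc_compatible (based_list Rs) \<longleftrightarrow> Clo (based_list Rs)"
proof
  have oz: "\<forall>D\<in>set (based_list Rs). one \<in> D \<and> zero \<notin> D" by (rule rep_oz[OF assms])
  show "dc_compatible (based_list Rs) \<Longrightarrow> Clo (based_list Rs)"
    unfolding dc_compatible_def using dc2_clo[OF _ oz] by blast
  assume c: "Clo (based_list Rs)"
  have o: "\<forall>D\<in>set (based_list Rs). one \<in> D" using oz by blast
  have "DC2 (based_list Rs)" by (rule clo_dc2[OF c o])
  then show "dc_compatible (based_list Rs)" unfolding dc_compatible_def using dc2_dc1 by blast
qed

theorem theorem7p6:
  fixes one zero :: "'v::finite"
    and R :: "'v set \<Rightarrow> 'v set \<Rightarrow> bool"
    and I :: "'c \<Rightarrow> 'v list \<Rightarrow> 'v"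
  assumes "one \<noteq> zero"
    and "intersective_mixed one zero R"
    and "constant_expressive I"
  shows "(admits_G_conj_disj I R \<longleftrightarrow>
           (\<forall>Rs. minimal_rep one zero R Rs \<longrightarrow> dc_compatible (based_list Rs)))
       \<and> ((\<forall>Rs. minimal_rep one zero R Rs \<longrightarrow> dc_compatible (based_list Rs)) \<longleftrightarrow>
           (\<exists>Rs. is_rep one zero R Rs \<and> dc_compatible (based_list Rs)))"
proof -
  obtain Rs0 where "is_rep one zero R Rs0" using assms(2) unfolding intersective_mixed_def by blast
  then obtain Rm where "is_rep one zero R Rm \<and> (\<forall>y. is_rep one zero R y \<longrightarrow> length Rm \<le> length y)"
    using ex_has_least_nat[of "is_rep one zero R" Rs0 length] by blast
  then have mRm: "minimal_rep one zero R Rm" unfolding minimal_rep_def by blast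
  have repRm: "is_rep one zero R Rm" using mRm unfolding minimal_rep_def by blast
  have i_ii: "\<forall>Rs. minimal_rep one zero R Rs \<longrightarrow> dc_compatible (based_list Rs)"
    if adm: "admits_G_conj_disj I R"
  proof (intro allI impI)
    fix Rs assume m: "minimal_rep one zero R Rs"
    obtain fc fd where "condC R fc" "condD R fd" using admits_cond[OF assms(3) adm] by blast
    then have "Clo (based_list Rs)" using cond_clo[OF m] by blast
    then show "dc_compatible (based_list Rs)"
      using dc_iff_clo m unfolding minimal_rep_def by blast
  qed
  have iii_i: "admits_G_conj_disj I R" if ex3: "\<exists>Rs. is_rep one zero R Rs \<and> dc_compatible (based_list Rs)"
  proof -
    obtain Rs where r: "is_rep one zero R Rs" "dc_compatible (based_list Rs)" using ex3 by blast
    then have "Clo (based_list Rs)" using dc_iff_clo by blast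
    then obtain fc fd where "condC R fc" "condD R fd" using clo_cond[OF r(1)] by blast
    then show ?thesis by (rule cond_admits)
  qed
  have ii_iii: "\<exists>Rs. is_rep one zero R Rs \<and> dc_compatible (based_list Rs)"
    if "\<forall>Rs. minimal_rep one zero R Rs \<longrightarrow> dc_compatible (based_list Rs)"
    using that mRm repRm by blast
  show ?thesis using i_ii iii_i ii_iii by blast
qed

end
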